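(* Let $\gamma:[0,\infty)\to[0,\infty)$, $t\mapsto\gamma_t$, be monotonically decreasing, $\Gamma(t)=\int_0^t\gamma_s\,ds$, and let $\mathcal K:[0,\infty)\to[0,\infty)$ be monotonically decreasing with $\|\mathcal K\|_1<\infty$, $F:[0,\infty)\to[0,\infty)$, and $R:[0,\infty)\to[0,\infty)$ satisfy \[ R(t)=F(\Gamma(t))+\int_0^t\gamma_s^2\mathcal K(\Gamma(t)-\Gamma(s))R(s)\,ds. \] Then for all $t$, \[ R(t)\ge F(\Gamma(t))+\int_0^t\gamma_s^2\mathcal K(\Gamma(t)-\Gamma(s))F(\Gamma(s))\,ds. \] If in addition there exist $\epsilon>0$ and $T>0$ such that for all $t>T$, $\int_0^t\mathcal K(s)\mathcal K(t-s)\,ds\le2(1+\epsilon)\|\mathcal K\|_1\mathcal K(t)$, and $2\|\mathcal K\|_1(1+\epsilon)\gamma_0<1$, then for all $t$, \[ R(t)\le F(\Gamma(t))+C\int_0^t\gamma_s^2\mathcal K(\Gamma(t)-\Gamma(s))F(\Gamma(s))\,ds,\qquad C=\Big(\frac{\mathcal K(0)}{\mathcal K(T)(2\epsilon+1)}+2\Big)\frac{1}{1-2\gamma_0\|\mathcal K\|_1(1+\epsilon)}. \]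
   Context: $\|\mathcal K\|_1=\int_0^\infty\mathcal K(x)\,dx$. In the paper's application, $F(x)=\frac1{2d}\sum_i\lambda_iD_i^2(0)e^{-2\lambda_ix}$ and $\mathcal K(x)=\frac1d\sum_i\lambda_i^2e^{-2\lambda_ix}$ for the eigenvalues $\lambda_i\ge0$ of a covariance matrix, so all functions involved are nonnegative. *)

theory Defs
  imports "HOL-Analysis.Analysis"
begin

end

theory Submission
  imports Defs
begin


lemma borel_lebesgue_on: "(f::real\<Rightarrow>real) \<in> borel_measurable borel \<Longrightarrow> f \<in> borel_measurable (lebesgue_on S)"
  by (simp add: measurable_completion measurable_restrict_space1)

lemma bdd_borel_integrable:
  fixes f :: "real \<Rightarrow> real"
  assumes "f \<in> borel_measurable borel" "\<And>x. x \<in> {a..b} \<Longrightarrow> \<bar>f x\<bar> \<le> B"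
  shows "f integrable_on {a..b}"
proof (rule measurable_bounded_by_integrable_imp_integrable[where g="\<lambda>_. B"])
  show "f \<in> borel_measurable (lebesgue_on {a..b})"
    using assms(1) by (rule borel_lebesgue_on)
  show "(\<lambda>_. B) integrable_on {a..b}" by (rule Henstock_Kurzweil_Integration.integrable_const_ivl)
qed (use assms in auto)

locale L14 =
  fixes \<gamma> K F R :: "real \<Rightarrow> real" and \<Gamma> :: "real \<Rightarrow> real"
  assumes \<gamma>_nonneg: "\<And>t. t \<ge> 0 \<Longrightarrow> \<gamma> t \<ge> 0"
    and \<gamma>_decr: "antimono_on {0..} \<gamma>"
    and \<Gamma>_def: "\<And>t. \<Gamma> t = integral {0..t} \<gamma>"
    and K_nonneg: "\<And>t. t \<ge> 0 \<Longrightarrow> K t \<ge> 0"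
    and K_decr: "antimono_on {0..} K"
    and K_L1: "K integrable_on {0..}"
    and F_nonneg: "\<And>t. t \<ge> 0 \<Longrightarrow> F t \<ge> 0"
    and R_nonneg: "\<And>t. t \<ge> 0 \<Longrightarrow> R t \<ge> 0"
    and R_int: "\<And>t. t \<ge> 0 \<Longrightarrow>
        (\<lambda>s. (\<gamma> s)\<^sup>2 * K (\<Gamma> t - \<Gamma> s) * R s) integrable_on {0..t}"
    and R_eq: "\<And>t. t \<ge> 0 \<Longrightarrow>
        R t = F (\<Gamma> t) + integral {0..t} (\<lambda>s. (\<gamma> s)\<^sup>2 * K (\<Gamma> t - \<Gamma> s) * R s)"
begin

definition "\<gamma>b x = \<gamma> (max x 0)"
definition "Kb x = K (max x 0)"

lemma \<gamma>_le: "0 \<le> x \<Longrightarrow> x \<le> y \<Longrightarrow> \<gamma> y \<le> \<gamma> x"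
  using \<gamma>_decr by (auto simp: monotone_on_def)
lemma K_le: "0 \<le> x \<Longrightarrow> x \<le> y \<Longrightarrow> K y \<le> K x"
  using K_decr by (auto simp: monotone_on_def)

lemma \<gamma>b_borel[measurable]: "\<gamma>b \<in> borel_measurable borel"
proof -
  have "mono (\<lambda>x. - \<gamma>b x)"
    by (auto simp: mono_def \<gamma>b_def intro!: \<gamma>_le)
  then have "(\<lambda>x. - (- \<gamma>b x)) \<in> borel_measurable borel"
    using borel_measurable_mono borel_measurable_uminus by blast
  then show ?thesis by simp
qed

lemma Kb_borel[measurable]: "Kb \<in> borel_measurable borel"
proof -
  have "mono (\<lambda>x. - Kb x)"
    by (auto simp: mono_def Kb_def intro!: K_le)
  then have "(\<lambda>x. - (- Kb x)) \<in> borel_measurable borel"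
    using borel_measurable_mono borel_measurable_uminus by blast
  then show ?thesis by simp
qed

lemma \<gamma>b_eq: "x \<ge> 0 \<Longrightarrow> \<gamma>b x = \<gamma> x" by (simp add: \<gamma>b_def)
lemma Kb_eq: "x \<ge> 0 \<Longrightarrow> Kb x = K x" by (simp add: Kb_def)
lemma \<gamma>b_nonneg: "\<gamma>b x \<ge> 0" by (simp add: \<gamma>b_def \<gamma>_nonneg)
lemma Kb_nonneg: "Kb x \<ge> 0" by (simp add: Kb_def K_nonneg)
lemma \<gamma>b_le0: "\<gamma>b x \<le> \<gamma> 0" by (simp add: \<gamma>b_def \<gamma>_le)
lemma Kb_le0: "Kb x \<le> K 0" by (simp add: Kb_def K_le)

lemma \<gamma>b_int: "\<gamma>b integrable_on {a..b}"
  by (rule bdd_borel_integrable[where B="\<gamma> 0"]) (auto simp: \<gamma>b_nonneg \<gamma>b_le0 abs_of_nonneg)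

lemma \<gamma>_int: "0 \<le> a \<Longrightarrow> \<gamma> integrable_on {a..b}"
  using \<gamma>b_int by (rule integrable_spike[where S="{}"]) (auto simp: \<gamma>b_eq)

lemma \<Gamma>_eq: "\<Gamma> t = integral {0..t} \<gamma>b"
  unfolding \<Gamma>_def by (rule integral_cong) (auto simp: \<gamma>b_eq)

lemma \<Gamma>_split: "0 \<le> s \<Longrightarrow> s \<le> t \<Longrightarrow> \<Gamma> t = \<Gamma> s + integral {s..t} \<gamma>b"
  unfolding \<Gamma>_eq using Henstock_Kurzweil_Integration.integral_combine[OF _ _ \<gamma>b_int, of 0 s t] by simp

lemma \<Gamma>_mono: "s \<le> t \<Longrightarrow> \<Gamma> s \<le> \<Gamma> t"
proof (cases "s < 0")
  case True
  then have "\<Gamma> s = 0" unfolding \<Gamma>_eq by simp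
  moreover have "\<Gamma> t \<ge> 0" unfolding \<Gamma>_eq
    by (rule integral_nonneg[OF \<gamma>b_int]) (simp add: \<gamma>b_nonneg)
  ultimately show ?thesis by simp
next
  case False
  assume "s \<le> t"
  then show ?thesis using False \<Gamma>_split[of s t] integral_nonneg[OF \<gamma>b_int, of s t] \<gamma>b_nonneg by force
qed

lemma \<Gamma>_borel[measurable]: "\<Gamma> \<in> borel_measurable borel"
  using borel_measurable_mono \<Gamma>_mono by (auto simp: mono_def)


lemma countable_negligible: "countable (D::real set) \<Longrightarrow> negligible D"
  unfolding negligible_iff_null_sets by (intro null_sets_completionI countable_imp_null_set_lborel)

lemma cov:
  assumes st: "0 \<le> s" "s \<le> t" and \<phi>b[measurable]: "\<phi> \<in> borel_measurable borel"
    and \<phi>0: "\<And>x. 0 \<le> \<phi> x" and \<phi>B: "\<And>x. \<phi> x \<le> B"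
  shows "(\<lambda>u. \<gamma>b u * \<phi> (\<Gamma> u - \<Gamma> s)) integrable_on {s..t}"
    and "integral {s..t} (\<lambda>u. \<gamma>b u * \<phi> (\<Gamma> u - \<Gamma> s)) \<le> integral {0..\<Gamma> t - \<Gamma> s} \<phi>"
proof -
  define g where "g u = \<Gamma> u - \<Gamma> s" for u
  define h where "h u = \<gamma>b u * \<phi> (g u)" for u
  have B0: "0 \<le> B" using \<phi>0[of 0] \<phi>B[of 0] by simp
  have hb: "\<bar>h u\<bar> \<le> \<gamma> 0 * B" for u
  proof -
    have "\<bar>h u\<bar> = \<gamma>b u * \<phi> (g u)" by (simp add: h_def abs_mult \<gamma>b_nonneg \<phi>0)
    also have "\<dots> \<le> \<gamma> 0 * B" by (rule mult_mono[OF \<gamma>b_le0 \<phi>B \<gamma>_nonneg \<phi>0]) simp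
    finally show ?thesis .
  qed
  have h_borel[measurable]: "h \<in> borel_measurable borel" unfolding h_def[abs_def] g_def[abs_def] by measurable
  show hint: "(\<lambda>u. \<gamma>b u * \<phi> (\<Gamma> u - \<Gamma> s)) integrable_on {s..t}"
    using bdd_borel_integrable[OF h_borel hb] unfolding h_def[abs_def] g_def[abs_def] .
  define D where "D = {u. \<not> isCont \<gamma>b u}"
  have "mono (\<lambda>x. - \<gamma>b x)"
    by (auto simp: mono_def \<gamma>b_def intro!: \<gamma>_le)
  then have "countable {u. \<not> isCont (\<lambda>x. - \<gamma>b x) u}" by (rule mono_ctble_discont)
  moreover have "D \<subseteq> {u. \<not> isCont (\<lambda>x. - \<gamma>b x) u}"
  proof
    fix u assume "u \<in> D"
    show "u \<in> {u. \<not> isCont (\<lambda>x. - \<gamma>b x) u}"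
    proof (rule ccontr)
      assume "u \<notin> {u. \<not> isCont (\<lambda>x. - \<gamma>b x) u}"
      then have "isCont (\<lambda>x. - (- \<gamma>b x)) u" using continuous_minus[of "at u" "\<lambda>x. - \<gamma>b x"] by simp
      then show False using \<open>u \<in> D\<close> by (simp add: D_def)
    qed
  qed
  ultimately have Dc: "countable D" by (rule countable_subset[rotated])
  then have Dn: "negligible D" by (rule countable_negligible)
  define S0 where "S0 = {u \<in> {s..t}. \<gamma>b u > 0} - D"
  have "{u \<in> {s..t}. \<gamma>b u > 0} \<in> sets borel" by measurable
  moreover have "D \<in> sets lborel" using countable_imp_null_set_lborel[OF Dc] by auto
  ultimately have S0m: "S0 \<in> sets lebesgue" unfolding S0_def
    by (metis sets.Diff sets_completionI_sets sets_lborel)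
  have S0sub: "S0 \<subseteq> {s..t}" unfolding S0_def by auto
  have S0lm: "S0 \<in> lmeasurable"
    by (rule bounded_set_imp_lmeasurable[OF bounded_subset[OF bounded_closed_interval S0sub] S0m])
  have der: "(g has_field_derivative \<gamma>b u) (at u within S0)" if "u \<in> S0" for u
  proof -
    have u: "u \<in> {0..t} - {}" "isCont \<gamma>b u" using that st unfolding S0_def D_def by auto
    have "((\<lambda>u. integral {0..u} \<gamma>b) has_vector_derivative \<gamma>b u) (at u within {0..t} - {})"
      by (rule integral_has_vector_derivative_continuous_at[OF \<gamma>b_int u(1)])
         (use u(2) continuous_at_imp_continuous_at_within in auto)
    moreover have "\<Gamma> = (\<lambda>u. integral {0..u} \<gamma>b)" using \<Gamma>_eq by (simp add: fun_eq_iff)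
    ultimately have "(\<Gamma> has_field_derivative \<gamma>b u) (at u within {0..t})"
      by (simp add: has_real_derivative_iff_has_vector_derivative)
    then have "((\<lambda>x. \<Gamma> x - \<Gamma> s) has_field_derivative \<gamma>b u - 0) (at u within {0..t})"
      by (rule DERIV_diff[OF _ DERIV_const])
    then have "(g has_field_derivative \<gamma>b u) (at u within {0..t})"
      by (simp add: g_def[abs_def])
    moreover have "S0 \<subseteq> {0..t}" using S0sub st by auto
    ultimately show ?thesis
      by (rule has_field_derivative_subset)
  qed
  have gstrict: "g u1 < g u2" if "u1 \<in> S0" "u2 \<in> S0" "u1 < u2" for u1 u2
  proof -
    have u: "0 \<le> u1" "\<gamma>b u2 > 0" using that st unfolding S0_def by auto
    have "integral {u1..u2} (\<lambda>_. \<gamma>b u2) \<le> integral {u1..u2} \<gamma>b"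
      by (rule integral_le) (auto intro: \<gamma>b_int simp: \<gamma>b_def intro!: \<gamma>_le)
    then have le: "\<gamma>b u2 * (u2 - u1) \<le> integral {u1..u2} \<gamma>b" using that by (simp add: mult.commute)
    have pos: "\<gamma>b u2 * (u2 - u1) > 0" using u that by simp
    have "\<Gamma> u2 = \<Gamma> u1 + integral {u1..u2} \<gamma>b" using \<Gamma>_split[of u1 u2] u that by simp
    then show ?thesis unfolding g_def using le pos by linarith
  qed
  have inj: "inj_on g S0"
  proof (rule inj_onI)
    fix x y assume xy: "x \<in> S0" "y \<in> S0" "g x = g y"
    show "x = y"
    proof (rule ccontr)
      assume "x \<noteq> y"
      then have "x < y \<or> y < x" by linarith
      then show False
      proof
        assume "x < y" then show False using gstrict[of x y] xy by simp
      next
        assume "y < x" then show False using gstrict[of y x] xy by simp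
      qed
    qed
  qed
  have habs: "(\<lambda>x. \<bar>\<gamma>b x\<bar> *\<^sub>R \<phi> (g x)) absolutely_integrable_on S0"
  proof (rule measurable_bounded_by_integrable_imp_absolutely_integrable[OF _ S0m])
    show "(\<lambda>x. \<bar>\<gamma>b x\<bar> *\<^sub>R \<phi> (g x)) \<in> borel_measurable (lebesgue_on S0)"
      by (rule borel_lebesgue_on) (unfold g_def[abs_def], measurable)
    show "(\<lambda>_. \<gamma> 0 * B) integrable_on S0" by (rule integrable_on_const[OF S0lm])
    show "norm (\<bar>\<gamma>b x\<bar> *\<^sub>R \<phi> (g x)) \<le> \<gamma> 0 * B" for x
      using hb[of x] unfolding h_def by (simp add: abs_mult)
  qed
  have cv: "\<phi> absolutely_integrable_on g ` S0 \<and> integral (g ` S0) \<phi> = integral S0 (\<lambda>x. \<bar>\<gamma>b x\<bar> *\<^sub>R \<phi> (g x))"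
    using iffD1[OF has_absolute_integral_change_of_variables_real[OF S0m der inj, of \<phi> "integral S0 (\<lambda>x. \<bar>\<gamma>b x\<bar> *\<^sub>R \<phi> (g x))"] conjI[OF habs refl]] .
  have "integral {s..t} h = integral {s..t} (\<lambda>u. if u \<in> S0 then h u else 0)"
  proof (rule integral_spike[OF Dn])
    fix u assume u: "u \<in> {s..t} - D"
    show "(if u \<in> S0 then h u else 0) = h u"
    proof (cases "u \<in> S0")
      case False
      then have "\<not> \<gamma>b u > 0" using u unfolding S0_def by auto
      then have "\<gamma>b u = 0" using \<gamma>b_nonneg[of u] by linarith
      then show ?thesis by (simp add: h_def)
    qed simp
  qed
  also have "\<dots> = integral S0 h"
    using S0sub by (simp add: integral_restrict_Int Int_absorb2)
  also have "\<dots> = integral (g ` S0) \<phi>"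
    using cv by (simp add: h_def[abs_def] \<gamma>b_nonneg)
  also have "\<dots> \<le> integral {0..\<Gamma> t - \<Gamma> s} \<phi>"
  proof (rule integral_subset_le)
    show "g ` S0 \<subseteq> {0..\<Gamma> t - \<Gamma> s}"
    proof
      fix y assume "y \<in> g ` S0"
      then obtain u where u: "u \<in> S0" "y = g u" by blast
      then have "s \<le> u" "u \<le> t" using S0sub by auto
      then show "y \<in> {0..\<Gamma> t - \<Gamma> s}" using \<Gamma>_mono[of s u] \<Gamma>_mono[of u t] u(2) unfolding g_def by auto
    qed
    show "\<phi> integrable_on g ` S0" using cv by (simp add: absolutely_integrable_on_def)
    show "\<phi> integrable_on {0..\<Gamma> t - \<Gamma> s}"
      by (rule bdd_borel_integrable[OF \<phi>b]) (use \<phi>0 \<phi>B in auto)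
  qed (use \<phi>0 in auto)
  finally show "integral {s..t} (\<lambda>u. \<gamma>b u * \<phi> (\<Gamma> u - \<Gamma> s)) \<le> integral {0..\<Gamma> t - \<Gamma> s} \<phi>"
    unfolding h_def g_def .
qed

end
context L14 begin

definition "Sf t = integral {0..t} (\<lambda>s. (\<gamma> s)\<^sup>2 * K (\<Gamma> t - \<Gamma> s) * R s)"

lemma kR_nonneg: "0 \<le> s \<Longrightarrow> s \<le> t \<Longrightarrow> 0 \<le> (\<gamma> s)\<^sup>2 * K (\<Gamma> t - \<Gamma> s) * R s"
  using K_nonneg[of "\<Gamma> t - \<Gamma> s"] \<Gamma>_mono[of s t] R_nonneg[of s] by simp

lemma Sf_nonneg: "0 \<le> t \<Longrightarrow> 0 \<le> Sf t"
  unfolding Sf_def by (rule integral_nonneg[OF R_int]) (auto intro: kR_nonneg)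

lemma R_Sf: "0 \<le> t \<Longrightarrow> R t = F (\<Gamma> t) + Sf t"
  using R_eq unfolding Sf_def by simp

lemma F_le_R: "0 \<le> t \<Longrightarrow> F (\<Gamma> t) \<le> R t"
  using R_Sf Sf_nonneg by fastforce

lemma part1:
  assumes t: "0 \<le> t"
  shows "F (\<Gamma> t) + integral {0..t} (\<lambda>s. (\<gamma> s)\<^sup>2 * K (\<Gamma> t - \<Gamma> s) * F (\<Gamma> s)) \<le> R t"
proof -
  have "integral {0..t} (\<lambda>s. (\<gamma> s)\<^sup>2 * K (\<Gamma> t - \<Gamma> s) * F (\<Gamma> s)) \<le> Sf t"
  proof (cases "(\<lambda>s. (\<gamma> s)\<^sup>2 * K (\<Gamma> t - \<Gamma> s) * F (\<Gamma> s)) integrable_on {0..t}")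
    case True
    show ?thesis unfolding Sf_def
    proof (rule integral_le[OF True R_int[OF t]])
      fix s assume s: "s \<in> {0..t}"
      have "0 \<le> (\<gamma> s)\<^sup>2 * K (\<Gamma> t - \<Gamma> s)"
        using K_nonneg[of "\<Gamma> t - \<Gamma> s"] \<Gamma>_mono[of s t] s by simp
      then show "(\<gamma> s)\<^sup>2 * K (\<Gamma> t - \<Gamma> s) * F (\<Gamma> s) \<le> (\<gamma> s)\<^sup>2 * K (\<Gamma> t - \<Gamma> s) * R s"
        using F_le_R[of s] s by (auto intro: mult_left_mono)
    qed
  next
    case False
    then show ?thesis using Sf_nonneg[OF t] by (simp add: not_integrable_integral)
  qed
  then show ?thesis using R_Sf[OF t] by simp
qed

end

locale L14b = L14 +
  fixes \<epsilon> T :: real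
  assumes eps: "\<epsilon> > 0" and Tpos: "T > 0"
    and conv: "\<forall>t>T. integral {0..t} (\<lambda>s. K s * K (t - s)) \<le> 2 * (1 + \<epsilon>) * integral {0..} K * K t"
    and small: "2 * integral {0..} K * (1 + \<epsilon>) * \<gamma> 0 < 1"
    and KT: "K T > 0"
begin

lemma KK_int: "0 \<le> t \<Longrightarrow> (\<lambda>s. K s * K (t - s)) integrable_on {0..t}"
proof -
  have "(\<lambda>s. Kb s * Kb (t - s)) integrable_on {0..t}"
    by (rule bdd_borel_integrable[where B="K 0 * K 0"]) 
       (use K_nonneg[of 0] in \<open>auto simp: abs_mult Kb_nonneg intro!: mult_mono Kb_le0\<close>)
  then show "0 \<le> t \<Longrightarrow> ?thesis"
    by (rule integrable_spike[where S="{}"]) (auto simp: Kb_eq)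
qed

lemma K_pos: assumes x: "x \<ge> 0" shows "K x > 0"
proof (rule ccontr)
  assume "\<not> K x > 0"
  then have Kx0: "K x = 0" using K_nonneg[OF x] by linarith
  have Tx: "T < x"
  proof (rule ccontr)
    assume "\<not> T < x"
    then have "K T \<le> K x" using x by (intro K_le) auto
    then show False using KT Kx0 by simp
  qed
  define P where "P = {y \<in> {0..x}. K y > 0}"
  have TP: "T \<in> P" unfolding P_def using Tpos Tx KT by auto
  have bdd: "bdd_above P" unfolding P_def by (rule bdd_aboveI[of _ x]) auto
  have Pne: "P \<noteq> {}" using TP by auto
  define z where "z = Sup P"
  have Tz: "T \<le> z" unfolding z_def by (rule cSup_upper[OF TP bdd])
  have zx: "z \<le> x" unfolding z_def by (rule cSup_least[OF Pne]) (auto simp: P_def)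
  have pos: "K y > 0" if y: "0 \<le> y" "y < z" for y
  proof -
    obtain p where p: "p \<in> P" "y < p" using less_cSupD[OF Pne] y(2) unfolding z_def by blast
    have "K p \<le> K y" using p y by (intro K_le) auto
    then show ?thesis using p by (auto simp: P_def)
  qed
  have zero: "K y = 0" if "z < y" for y
  proof (cases "y \<le> x")
    case True
    have "y \<notin> P" using that cSup_upper[OF _ bdd, of y] unfolding z_def by auto
    moreover have "0 \<le> y" using that Tz Tpos by linarith
    ultimately show ?thesis using True K_nonneg[of y] unfolding P_def by fastforce
  next
    case False
    then have "K y \<le> K x" using x by (intro K_le) auto
    then show ?thesis using Kx0 K_nonneg[of y] x False by linarith
  qed
  have z0: "z > 0" using Tz Tpos by linarith
  define t where "t = 3 * z / 2"
  have tz: "z < t" "T < t" using z0 Tz by (auto simp: t_def)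
  have Kt: "K t = 0" by (rule zero[OF tz(1)])
  have up: "integral {0..t} (\<lambda>s. K s * K (t - s)) \<le> 0"
    using conv tz(2) Kt by auto
  define c where "c = K (7 * z / 8) * K (7 * z / 8)"
  have c0: "c > 0" unfolding c_def using pos[of "7 * z / 8"] z0 by simp
  have int: "(\<lambda>s. K s * K (t - s)) integrable_on {0..t}" using KK_int tz z0 by simp
  have sub: "{5 * z / 8 .. 7 * z / 8} \<subseteq> {0..t}" using z0 by (auto simp: t_def)
  have "integral {5 * z / 8 .. 7 * z / 8} (\<lambda>_. c) \<le> integral {5 * z / 8 .. 7 * z / 8} (\<lambda>s. K s * K (t - s))"
  proof (rule integral_le)
    show "(\<lambda>s. K s * K (t - s)) integrable_on {5 * z / 8..7 * z / 8}"
      by (rule integrable_on_subinterval[OF int sub])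
    fix s assume s: "s \<in> {5 * z / 8..7 * z / 8}"
    have a: "K (7 * z / 8) \<le> K s" using s z0 by (intro K_le) auto
    have b: "K (7 * z / 8) \<le> K (t - s)" using s z0 by (intro K_le) (auto simp: t_def)
    show "c \<le> K s * K (t - s)" unfolding c_def
      by (rule mult_mono[OF a b]) (use K_nonneg s z0 in auto)
  qed auto
  also have "\<dots> \<le> integral {0..t} (\<lambda>s. K s * K (t - s))"
  proof (rule integral_subset_le[OF sub _ int])
    show "(\<lambda>s. K s * K (t - s)) integrable_on {5 * z / 8..7 * z / 8}"
      by (rule integrable_on_subinterval[OF int sub])
    show "\<forall>x\<in>{0..t}. 0 \<le> K x * K (t - x)" using K_nonneg by auto
  qed
  finally have "c * (z / 4) \<le> integral {0..t} (\<lambda>s. K s * K (t - s))" using z0 by (simp add: mult.commute)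
  then have "c * (z / 4) \<le> 0" using up by linarith
  then show False using c0 z0 by (simp add: mult_le_0_iff)
qed

end
context L14b begin

definition "LK = integral {0..} K"
definition "Cc = (K 0 / (K T * (2 * \<epsilon> + 1)) + 2) * (1 / (1 - 2 * \<gamma> 0 * LK * (1 + \<epsilon>)))"
definition "Ee = \<gamma> 0 * LK * K 0 / (1 - \<gamma> 0 * LK)"
definition "\<psi> x = min (Cc * Kb x) (Kb x + Ee)"

lemma K_int: "K integrable_on {0..x}"
  using integrable_on_subinterval[OF K_L1, of 0 x]
  by (simp add: subset_iff)

lemma LK_nonneg: "0 \<le> LK"
  unfolding LK_def by (rule integral_nonneg[OF K_L1]) (auto intro: K_nonneg)

lemma intK_le: "integral {0..x} K \<le> LK"
  unfolding LK_def by (rule integral_subset_le[OF _ K_int K_L1]) (auto intro: K_nonneg)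

lemma cst:
  shows "0 \<le> Ee" "1 \<le> Cc" "\<gamma> 0 * LK * (K 0 + Ee) = Ee" "Ee \<le> (Cc - 1) * K T"
    "Cc * (2 * (1 + \<epsilon>) * LK * \<gamma> 0) \<le> Cc - 1"
proof -
  define a where "a = \<gamma> 0 * LK"
  have a0: "0 \<le> a" unfolding a_def using \<gamma>_nonneg[of 0] LK_nonneg by simp
  have q: "2 * a * (1 + \<epsilon>) < 1" using small unfolding a_def LK_def by (simp add: mult_ac)
  have "0 \<le> 2 * a * \<epsilon>" using a0 eps by simp
  then have "2 * a \<le> 2 * a * (1 + \<epsilon>)" by (simp add: algebra_simps)
  then have a1: "a < 1 / 2" using q by linarith
  have K00: "0 \<le> K 0" using K_nonneg by simp
  have KT0: "0 < K T" using KT .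
  define q' where "q' = 2 * \<gamma> 0 * LK * (1 + \<epsilon>)"
  have q'eq: "q' = 2 * a * (1 + \<epsilon>)" unfolding q'_def a_def by simp
  have Cceq: "Cc = (K 0 / (K T * (2 * \<epsilon> + 1)) + 2) / (1 - q')" unfolding Cc_def q'_def by simp
  have Eeq: "Ee = a * K 0 / (1 - a)" unfolding Ee_def a_def by simp
  have X0: "0 \<le> K 0 / (K T * (2 * \<epsilon> + 1))" using K00 KT0 eps by simp
  have q'1: "0 < 1 - q'" "1 - q' \<le> 1" using q q'eq a0 eps by (auto intro!: mult_nonneg_nonneg)
  have CcX: "Cc * (1 - q') = K 0 / (K T * (2 * \<epsilon> + 1)) + 2" using Cceq q'1 by simp
  show "0 \<le> Ee" unfolding Eeq using a0 a1 K00 by simp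
  show C1: "1 \<le> Cc"
  proof -
    have "1 - q' \<le> Cc * (1 - q')" using CcX X0 q'1 by linarith
    then show ?thesis using q'1 by simp
  qed
  show "\<gamma> 0 * LK * (K 0 + Ee) = Ee" unfolding Eeq a_def[symmetric] using a1
    by (simp add: field_simps)
  show "Cc * (2 * (1 + \<epsilon>) * LK * \<gamma> 0) \<le> Cc - 1"
  proof -
    have "Cc * (1 - q') \<ge> 1" using CcX X0 by linarith
    then show ?thesis unfolding q'_def by (simp add: algebra_simps)
  qed
  show "Ee \<le> (Cc - 1) * K T"
  proof -
    have "0 \<le> q'" using q'eq a0 eps by simp
    then have "0 \<le> Cc * q'" using C1 by simp
    then have "Cc - 1 \<ge> Cc * (1 - q') - 1" by (simp add: algebra_simps)
    then have "Cc - 1 \<ge> K 0 / (K T * (2 * \<epsilon> + 1))" using CcX by linarith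
    then have "K 0 / (K T * (2 * \<epsilon> + 1)) * K T \<le> (Cc - 1) * K T"
      by (rule mult_right_mono) (use KT0 in simp)
    have d: "2 * \<epsilon> + 1 \<noteq> 0" "K T \<noteq> 0" using eps KT0 by auto
    have "K 0 / (K T * (2 * \<epsilon> + 1)) * K T = K 0 / (2 * \<epsilon> + 1)" using d by simp
    with \<open>K 0 / (K T * (2 * \<epsilon> + 1)) * K T \<le> (Cc - 1) * K T\<close>
    have A: "K 0 / (2 * \<epsilon> + 1) \<le> (Cc - 1) * K T" by simp
    have "a * (2 * \<epsilon> + 1) \<le> 1 - a" using q by (simp add: algebra_simps)
    then have "a / (1 - a) \<le> 1 / (2 * \<epsilon> + 1)" using a1 eps by (simp add: field_simps)
    then have "a / (1 - a) * K 0 \<le> 1 / (2 * \<epsilon> + 1) * K 0" using K00 by (rule mult_right_mono)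
    then have "Ee \<le> K 0 / (2 * \<epsilon> + 1)" unfolding Eeq by simp
    then show ?thesis using A by linarith
  qed
qed

lemma Kb_pos: "Kb x > 0" unfolding Kb_def by (rule K_pos) simp

lemma \<psi>_borel[measurable]: "\<psi> \<in> borel_measurable borel"
  unfolding \<psi>_def[abs_def] by measurable

lemma \<psi>_ge: "Kb x \<le> \<psi> x"
  using cst(1,2) Kb_nonneg[of x] unfolding \<psi>_def by (simp add: mult_le_cancel_right1)

lemma \<psi>_le: "\<psi> x \<le> Cc * Kb x" "\<psi> x \<le> K 0 + Ee"
  unfolding \<psi>_def using Kb_le0[of x] by auto

end
context L14b begin

lemma nn_bdd_int:
  fixes f :: "real \<Rightarrow> real"
  assumes "f \<in> borel_measurable borel" "\<And>u. 0 \<le> f u" "\<And>u. f u \<le> B"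
  shows "f integrable_on {a..b}"
  by (rule bdd_borel_integrable[OF assms(1), of _ _ B]) (use assms(2,3) in \<open>auto simp: abs_of_nonneg\<close>)

lemma \<psi>_nonneg: "0 \<le> \<psi> x" using \<psi>_ge[of x] Kb_nonneg[of x] by linarith

lemma column:
  assumes st: "0 \<le> s" "s \<le> t"
  shows "(\<lambda>u. (\<gamma>b u)\<^sup>2 * \<psi> (\<Gamma> t - \<Gamma> u) * Kb (\<Gamma> u - \<Gamma> s)) integrable_on {s..t}"
    and "integral {s..t} (\<lambda>u. (\<gamma>b u)\<^sup>2 * \<psi> (\<Gamma> t - \<Gamma> u) * Kb (\<Gamma> u - \<Gamma> s)) \<le> \<psi> (\<Gamma> t - \<Gamma> s) - Kb (\<Gamma> t - \<Gamma> s)"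
proof -
  define x where "x = \<Gamma> t - \<Gamma> s"
  have x0: "0 \<le> x" unfolding x_def using \<Gamma>_mono[OF st(2)] by simp
  have g0: "0 \<le> \<gamma> 0" using \<gamma>_nonneg by simp
  have K00: "0 \<le> K 0" using K_nonneg by simp
  have E0: "0 \<le> Ee" using cst(1) .
  define f1 where "f1 u = (\<gamma>b u)\<^sup>2 * \<psi> (\<Gamma> t - \<Gamma> u) * Kb (\<Gamma> u - \<Gamma> s)" for u
  define f2 where "f2 u = \<gamma>b u * (\<psi> (\<Gamma> t - \<Gamma> u) * Kb (\<Gamma> u - \<Gamma> s))" for u
  have f1m[measurable]: "f1 \<in> borel_measurable borel" unfolding f1_def[abs_def] by measurable
  have f2m[measurable]: "f2 \<in> borel_measurable borel" unfolding f2_def[abs_def] by measurable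
  have pnn: "0 \<le> \<psi> (\<Gamma> t - \<Gamma> u) * Kb (\<Gamma> u - \<Gamma> s)" for u
    using \<psi>_nonneg Kb_nonneg by simp
  have pB: "\<psi> (\<Gamma> t - \<Gamma> u) * Kb (\<Gamma> u - \<Gamma> s) \<le> (K 0 + Ee) * K 0" for u
    by (rule mult_mono[OF \<psi>_le(2) Kb_le0]) (use K00 E0 Kb_nonneg in auto)
  have f2nn: "0 \<le> f2 u" for u unfolding f2_def using pnn \<gamma>b_nonneg by simp
  have f2B: "f2 u \<le> \<gamma> 0 * ((K 0 + Ee) * K 0)" for u
    unfolding f2_def by (rule mult_mono[OF \<gamma>b_le0 pB g0 pnn])
  have f1eq: "f1 u = \<gamma>b u * f2 u" for u unfolding f1_def f2_def by (simp add: power2_eq_square mult_ac)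
  have f1nn: "0 \<le> f1 u" for u using f1eq f2nn \<gamma>b_nonneg by simp
  have f1le: "f1 u \<le> \<gamma> 0 * f2 u" for u unfolding f1eq by (rule mult_right_mono[OF \<gamma>b_le0 f2nn])
  have f1B: "f1 u \<le> \<gamma> 0 * (\<gamma> 0 * ((K 0 + Ee) * K 0))" for u
    using f1le[of u] mult_left_mono[OF f2B g0] by (meson order_trans)
  have f1i: "f1 integrable_on {s..t}" by (rule nn_bdd_int[OF f1m f1nn f1B])
  have f2i: "f2 integrable_on {s..t}" by (rule nn_bdd_int[OF f2m f2nn f2B])
  show "(\<lambda>u. (\<gamma>b u)\<^sup>2 * \<psi> (\<Gamma> t - \<Gamma> u) * Kb (\<Gamma> u - \<Gamma> s)) integrable_on {s..t}"
    using f1i unfolding f1_def[abs_def] .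
  have J1: "integral {s..t} f1 \<le> \<gamma> 0 * integral {s..t} f2"
  proof -
    have "integral {s..t} f1 \<le> integral {s..t} (\<lambda>u. \<gamma> 0 * f2 u)"
      by (rule integral_le[OF f1i integrable_on_mult_right[OF f2i]]) (use f1le in auto)
    then show ?thesis by simp
  qed
  define \<phi>A where "\<phi>A w = Kb (x - w) * Kb w" for w
  have \<phi>Am[measurable]: "\<phi>A \<in> borel_measurable borel" unfolding \<phi>A_def[abs_def] by measurable
  have \<phi>A0: "0 \<le> \<phi>A w" for w unfolding \<phi>A_def using Kb_nonneg by simp
  have \<phi>AB: "\<phi>A w \<le> K 0 * K 0" for w unfolding \<phi>A_def by (rule mult_mono[OF Kb_le0 Kb_le0 K00 Kb_nonneg])
  have covA: "(\<lambda>u. \<gamma>b u * \<phi>A (\<Gamma> u - \<Gamma> s)) integrable_on {s..t}"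
    "integral {s..t} (\<lambda>u. \<gamma>b u * \<phi>A (\<Gamma> u - \<Gamma> s)) \<le> integral {0..\<Gamma> t - \<Gamma> s} \<phi>A"
    using cov[OF st \<phi>Am \<phi>A0 \<phi>AB] by auto
  have A: "integral {s..t} f2 \<le> Cc * integral {0..x} (\<lambda>w. K w * K (x - w))"
  proof -
    have "integral {s..t} f2 \<le> integral {s..t} (\<lambda>u. Cc * (\<gamma>b u * \<phi>A (\<Gamma> u - \<Gamma> s)))"
    proof (rule integral_le[OF f2i])
      show "(\<lambda>u. Cc * (\<gamma>b u * \<phi>A (\<Gamma> u - \<Gamma> s))) integrable_on {s..t}"
        using covA(1) by (rule integrable_on_mult_right)
      fix u
      have "\<psi> (\<Gamma> t - \<Gamma> u) * Kb (\<Gamma> u - \<Gamma> s) \<le> Cc * Kb (\<Gamma> t - \<Gamma> u) * Kb (\<Gamma> u - \<Gamma> s)"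
        by (rule mult_right_mono[OF \<psi>_le(1) Kb_nonneg])
      also have "\<dots> = Cc * \<phi>A (\<Gamma> u - \<Gamma> s)" unfolding \<phi>A_def x_def by (simp add: mult_ac)
      finally show "f2 u \<le> Cc * (\<gamma>b u * \<phi>A (\<Gamma> u - \<Gamma> s))"
        unfolding f2_def using \<gamma>b_nonneg[of u]
        by (metis (no_types, lifting) mult.left_commute mult_left_mono)
    qed
    also have "\<dots> = Cc * integral {s..t} (\<lambda>u. \<gamma>b u * \<phi>A (\<Gamma> u - \<Gamma> s))" by simp
    also have "\<dots> \<le> Cc * integral {0..x} \<phi>A"
      using covA(2) cst(2) unfolding x_def by (intro mult_left_mono) auto
    also have "integral {0..x} \<phi>A = integral {0..x} (\<lambda>w. K w * K (x - w))"
      by (rule integral_cong) (auto simp: \<phi>A_def Kb_eq mult.commute)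
    finally show ?thesis .
  qed
  have covB: "(\<lambda>u. \<gamma>b u * Kb (\<Gamma> u - \<Gamma> s)) integrable_on {s..t}"
    "integral {s..t} (\<lambda>u. \<gamma>b u * Kb (\<Gamma> u - \<Gamma> s)) \<le> integral {0..\<Gamma> t - \<Gamma> s} Kb"
    using cov[OF st Kb_borel Kb_nonneg Kb_le0] by auto
  have B: "integral {s..t} f2 \<le> (K 0 + Ee) * LK"
  proof -
    have "integral {s..t} f2 \<le> integral {s..t} (\<lambda>u. (K 0 + Ee) * (\<gamma>b u * Kb (\<Gamma> u - \<Gamma> s)))"
    proof (rule integral_le[OF f2i])
      show "(\<lambda>u. (K 0 + Ee) * (\<gamma>b u * Kb (\<Gamma> u - \<Gamma> s))) integrable_on {s..t}"
        using covB(1) by (rule integrable_on_mult_right)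
      fix u
      have "\<psi> (\<Gamma> t - \<Gamma> u) * Kb (\<Gamma> u - \<Gamma> s) \<le> (K 0 + Ee) * Kb (\<Gamma> u - \<Gamma> s)"
        by (rule mult_right_mono[OF \<psi>_le(2) Kb_nonneg])
      then show "f2 u \<le> (K 0 + Ee) * (\<gamma>b u * Kb (\<Gamma> u - \<Gamma> s))"
        unfolding f2_def using \<gamma>b_nonneg[of u]
        by (metis (no_types, lifting) mult.left_commute mult_left_mono)
    qed
    also have "\<dots> = (K 0 + Ee) * integral {s..t} (\<lambda>u. \<gamma>b u * Kb (\<Gamma> u - \<Gamma> s))" by simp
    also have "\<dots> \<le> (K 0 + Ee) * integral {0..x} Kb"
      using covB(2) K00 E0 unfolding x_def by (intro mult_left_mono) auto
    also have "integral {0..x} Kb = integral {0..x} K"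
      by (rule integral_cong) (auto simp: Kb_eq)
    also have "(K 0 + Ee) * integral {0..x} K \<le> (K 0 + Ee) * LK"
      using intK_le K00 E0 by (intro mult_left_mono) auto
    finally show ?thesis .
  qed
  have JE: "integral {s..t} f1 \<le> Ee"
  proof -
    have "\<gamma> 0 * integral {s..t} f2 \<le> \<gamma> 0 * ((K 0 + Ee) * LK)" by (rule mult_left_mono[OF B g0])
    also have "\<dots> = Ee" using cst(3) by (simp add: mult_ac)
    finally show ?thesis using J1 by linarith
  qed
  have JK: "integral {s..t} f1 \<le> (Cc - 1) * Kb x"
  proof (cases "x > T")
    case True
    have "integral {0..x} (\<lambda>w. K w * K (x - w)) \<le> 2 * (1 + \<epsilon>) * LK * K x"
      using conv True unfolding LK_def by auto
    then have "Cc * integral {0..x} (\<lambda>w. K w * K (x - w)) \<le> Cc * (2 * (1 + \<epsilon>) * LK * K x)"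
      using cst(2) by (intro mult_left_mono) auto
    then have "\<gamma> 0 * integral {s..t} f2 \<le> \<gamma> 0 * (Cc * (2 * (1 + \<epsilon>) * LK * K x))"
      using A g0 by (meson mult_left_mono order_trans)
    also have "\<dots> = (Cc * (2 * (1 + \<epsilon>) * LK * \<gamma> 0)) * K x" by (simp add: mult_ac)
    also have "\<dots> \<le> (Cc - 1) * K x" by (rule mult_right_mono[OF cst(5) K_nonneg[OF x0]])
    finally show ?thesis using J1 Kb_eq[OF x0] by simp
  next
    case False
    have "Ee \<le> (Cc - 1) * K T" by (rule cst(4))
    also have "\<dots> \<le> (Cc - 1) * K x" using False x0 cst(2) by (intro mult_left_mono K_le) auto
    finally show ?thesis using JE Kb_eq[OF x0] by simp
  qed
  have "\<psi> x - Kb x = min ((Cc - 1) * Kb x) Ee" unfolding \<psi>_def by (simp add: algebra_simps min_diff_distrib_left)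
  then show "integral {s..t} (\<lambda>u. (\<gamma>b u)\<^sup>2 * \<psi> (\<Gamma> t - \<Gamma> u) * Kb (\<Gamma> u - \<Gamma> s)) \<le> \<psi> (\<Gamma> t - \<Gamma> s) - Kb (\<Gamma> t - \<Gamma> s)"
    using JE JK unfolding f1_def[abs_def] x_def by simp
qed

end
context L14b begin

lemma borel_leb: "(f :: real \<Rightarrow> 'b::topological_space) \<in> borel_measurable borel \<Longrightarrow> f \<in> borel_measurable lebesgue"
  by (simp add: measurable_completion)

lemma id_leb: "(\<lambda>x::real. x) \<in> borel_measurable lebesgue" by (rule borel_leb) simp
lemma \<Gamma>_leb: "\<Gamma> \<in> borel_measurable lebesgue" by (rule borel_leb) simp
lemma \<gamma>b_leb: "\<gamma>b \<in> borel_measurable lebesgue" by (rule borel_leb) simp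
lemma Kb_leb: "Kb \<in> borel_measurable lebesgue" by (rule borel_leb) simp
lemma \<psi>_leb: "\<psi> \<in> borel_measurable lebesgue" by (rule borel_leb) simp

definition "\<rho> t s = indicator {0..t} s * ((\<gamma> s)\<^sup>2 * R s)"

lemma \<rho>_nonneg: "0 \<le> \<rho> t s"
  unfolding \<rho>_def using R_nonneg[of s] by (auto simp: indicator_def)

lemma \<rho>_meas: assumes t: "0 \<le> t" shows "\<rho> t \<in> borel_measurable lebesgue"
proof -
  note [measurable] = id_leb \<Gamma>_leb \<gamma>b_leb Kb_leb \<psi>_leb
  have m[measurable]: "(\<lambda>s. indicator {0..t} s *\<^sub>R ((\<gamma> s)\<^sup>2 * K (\<Gamma> t - \<Gamma> s) * R s)) \<in> borel_measurable lebesgue"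
    by (rule has_integral_implies_lebesgue_measurable[OF integrable_integral[OF R_int[OF t]]])
  have eq: "\<rho> t s = indicator {0..t} s *\<^sub>R ((\<gamma> s)\<^sup>2 * K (\<Gamma> t - \<Gamma> s) * R s) / Kb (\<Gamma> t - \<Gamma> s)" for s
  proof (cases "s \<in> {0..t}")
    case True
    then have "\<Gamma> s \<le> \<Gamma> t" by (intro \<Gamma>_mono) auto
    then have "Kb (\<Gamma> t - \<Gamma> s) = K (\<Gamma> t - \<Gamma> s)" by (simp add: Kb_eq)
    then show ?thesis using True Kb_pos[of "\<Gamma> t - \<Gamma> s"] by (simp add: \<rho>_def)
  qed (simp add: \<rho>_def)
  have "(\<lambda>s. indicator {0..t} s *\<^sub>R ((\<gamma> s)\<^sup>2 * K (\<Gamma> t - \<Gamma> s) * R s) / Kb (\<Gamma> t - \<Gamma> s)) \<in> borel_measurable lebesgue"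
    by measurable
  then show ?thesis using eq by (simp add: fun_eq_iff[symmetric] eq[abs_def])
qed

definition "Pt t = (SOME P. P \<in> borel_measurable borel \<and> (AE s in lborel. ennreal (\<rho> t s) = P s))"

lemma Pt: assumes t: "0 \<le> t"
  shows "Pt t \<in> borel_measurable borel" "AE s in lborel. ennreal (\<rho> t s) = Pt t s"
proof -
  have "(\<lambda>s. ennreal (\<rho> t s)) \<in> borel_measurable (completion lborel)"
    using \<rho>_meas[OF t] by measurable
  from completion_ex_borel_measurable[OF this]
  have "\<exists>P. P \<in> borel_measurable borel \<and> (AE s in lborel. ennreal (\<rho> t s) = P s)" by auto
  from someI_ex[OF this] show "Pt t \<in> borel_measurable borel" "AE s in lborel. ennreal (\<rho> t s) = Pt t s"
    unfolding Pt_def by auto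
qed

definition "N t u = (\<integral>\<^sup>+ s. (if 0 \<le> s \<and> s \<le> u then ennreal (Kb (\<Gamma> u - \<Gamma> s)) * Pt t s else 0) \<partial>lborel)"

lemma N_meas: assumes t: "0 \<le> t" shows "N t \<in> borel_measurable borel"
proof -
  have [measurable]: "Pt t \<in> borel_measurable borel" using Pt[OF t] by simp
  show ?thesis unfolding N_def[abs_def] by measurable
qed

lemma N_Sf: assumes t: "0 \<le> t" and u: "0 \<le> u" "u \<le> t" shows "N t u = ennreal (Sf u)"
proof -
  have "(\<integral>\<^sup>+ s. ennreal ((\<gamma> s)\<^sup>2 * K (\<Gamma> u - \<Gamma> s) * R s) * indicator {0..u} s \<partial>lborel) = ennreal (Sf u)"
    unfolding Sf_def
    by (rule nn_integral_has_integral_lebesgue'[OF _ integrable_integral[OF R_int[OF u(1)]]])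
       (auto intro: kR_nonneg)
  moreover have "(\<integral>\<^sup>+ s. ennreal ((\<gamma> s)\<^sup>2 * K (\<Gamma> u - \<Gamma> s) * R s) * indicator {0..u} s \<partial>lborel) = N t u"
    unfolding N_def
  proof (rule nn_integral_cong_AE)
    show "AE s in lborel. ennreal ((\<gamma> s)\<^sup>2 * K (\<Gamma> u - \<Gamma> s) * R s) * indicator {0..u} s =
        (if 0 \<le> s \<and> s \<le> u then ennreal (Kb (\<Gamma> u - \<Gamma> s)) * Pt t s else 0)"
      using Pt(2)[OF t]
    proof (rule eventually_mono)
      fix s assume P: "ennreal (\<rho> t s) = Pt t s"
      show "ennreal ((\<gamma> s)\<^sup>2 * K (\<Gamma> u - \<Gamma> s) * R s) * indicator {0..u} s =
        (if 0 \<le> s \<and> s \<le> u then ennreal (Kb (\<Gamma> u - \<Gamma> s)) * Pt t s else 0)"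
      proof (cases "0 \<le> s \<and> s \<le> u")
        case True
        then have "\<Gamma> s \<le> \<Gamma> u" by (intro \<Gamma>_mono) auto
        then have Kbe: "Kb (\<Gamma> u - \<Gamma> s) = K (\<Gamma> u - \<Gamma> s)" by (simp add: Kb_eq)
        have "\<rho> t s = (\<gamma> s)\<^sup>2 * R s" using True u by (simp add: \<rho>_def)
        then have "Pt t s = ennreal ((\<gamma> s)\<^sup>2 * R s)" using P by simp
        moreover have "ennreal ((\<gamma> s)\<^sup>2 * K (\<Gamma> u - \<Gamma> s) * R s) = ennreal (K (\<Gamma> u - \<Gamma> s)) * ennreal ((\<gamma> s)\<^sup>2 * R s)"
          using K_nonneg[of "\<Gamma> u - \<Gamma> s"] \<open>\<Gamma> s \<le> \<Gamma> u\<close> R_nonneg[of s] True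
          by (subst ennreal_mult[symmetric]) (auto simp: mult_ac)
        ultimately show ?thesis using True Kbe by simp
      next
        case False
        then show ?thesis by auto
      qed
    qed
  qed
  ultimately show ?thesis by simp
qed

lemma Sf_N: assumes t: "0 \<le> t" and u: "0 \<le> u" "u \<le> t" shows "Sf u = enn2real (N t u)"
  using N_Sf[OF assms] Sf_nonneg[OF u(1)] by simp

definition "w t s = indicator {0..t} s * ((\<gamma> s)\<^sup>2 * F (\<Gamma> s))"

lemma w_meas: assumes t: "0 \<le> t" shows "w t \<in> borel_measurable lebesgue"
proof -
  note [measurable] = id_leb \<Gamma>_leb \<gamma>b_leb Kb_leb \<psi>_leb
  have [measurable]: "N t \<in> borel_measurable lebesgue" by (rule borel_leb[OF N_meas[OF t]])
  have [measurable]: "\<rho> t \<in> borel_measurable lebesgue" by (rule \<rho>_meas[OF t])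
  have eq: "w t s = \<rho> t s - indicator {0..t} s * ((\<gamma>b s)\<^sup>2 * enn2real (N t s))" for s
  proof (cases "s \<in> {0..t}")
    case True
    then show ?thesis using R_Sf[of s] Sf_N[OF t, of s] \<gamma>b_eq[of s]
      by (simp add: w_def \<rho>_def algebra_simps)
  qed (simp add: w_def \<rho>_def)
  have "(\<lambda>s. \<rho> t s - indicator {0..t} s * ((\<gamma>b s)\<^sup>2 * enn2real (N t s))) \<in> borel_measurable lebesgue"
    by measurable
  then show ?thesis using eq by (simp add: eq[abs_def])
qed

end
context L14b begin

lemma \<Gamma>0: "\<Gamma> 0 = 0" unfolding \<Gamma>_def by simp
lemma \<Gamma>_nonneg: "0 \<le> u \<Longrightarrow> 0 \<le> \<Gamma> u" using \<Gamma>_mono[of 0 u] \<Gamma>0 by simp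

lemma kf_nonneg: "0 \<le> s \<Longrightarrow> s \<le> t \<Longrightarrow> 0 \<le> (\<gamma> s)\<^sup>2 * K (\<Gamma> t - \<Gamma> s) * F (\<Gamma> s)"
  using K_nonneg[of "\<Gamma> t - \<Gamma> s"] \<Gamma>_mono[of s t] F_nonneg[OF \<Gamma>_nonneg[of s]] by simp

lemma kf_int: assumes t: "0 \<le> t"
  shows "(\<lambda>s. (\<gamma> s)\<^sup>2 * K (\<Gamma> t - \<Gamma> s) * F (\<Gamma> s)) integrable_on {0..t}"
proof (rule measurable_bounded_by_integrable_imp_integrable[OF _ R_int[OF t]])
  note [measurable] = id_leb \<Gamma>_leb \<gamma>b_leb Kb_leb \<psi>_leb
  have [measurable]: "w t \<in> borel_measurable lebesgue" by (rule w_meas[OF t])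
  have "(\<lambda>s. Kb (\<Gamma> t - \<Gamma> s) * w t s) \<in> borel_measurable lebesgue" by measurable
  then have m: "(\<lambda>s. Kb (\<Gamma> t - \<Gamma> s) * w t s) \<in> borel_measurable (lebesgue_on {0..t})"
    by (rule measurable_restrict_space1)
  have eq: "Kb (\<Gamma> t - \<Gamma> s) * w t s = (\<gamma> s)\<^sup>2 * K (\<Gamma> t - \<Gamma> s) * F (\<Gamma> s)"
    if "s \<in> space (lebesgue_on {0..t})" for s
  proof -
    have s: "0 \<le> s" "s \<le> t" using that by auto
    then have "\<Gamma> s \<le> \<Gamma> t" by (intro \<Gamma>_mono)
    then show ?thesis using s by (simp add: Kb_eq w_def)
  qed
  show "(\<lambda>s. (\<gamma> s)\<^sup>2 * K (\<Gamma> t - \<Gamma> s) * F (\<Gamma> s)) \<in> borel_measurable (lebesgue_on {0..t})"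
    by (rule measurable_cong[THEN iffD1, OF eq m])
  show "norm ((\<gamma> s)\<^sup>2 * K (\<Gamma> t - \<Gamma> s) * F (\<Gamma> s)) \<le> (\<gamma> s)\<^sup>2 * K (\<Gamma> t - \<Gamma> s) * R s"
    if "s \<in> {0..t}" for s
  proof -
    have s: "0 \<le> s" "s \<le> t" using that by auto
    have "0 \<le> (\<gamma> s)\<^sup>2 * K (\<Gamma> t - \<Gamma> s)"
      using K_nonneg[of "\<Gamma> t - \<Gamma> s"] \<Gamma>_mono[of s t] s by simp
    then show ?thesis using kf_nonneg[OF s] F_le_R[OF s(1)]
      by (simp add: mult_left_mono)
  qed
qed simp

end
context L14b begin

lemma main:
  assumes t: "0 \<le> t"
  shows "R t \<le> F (\<Gamma> t) + Cc * integral {0..t} (\<lambda>s. (\<gamma> s)\<^sup>2 * K (\<Gamma> t - \<Gamma> s) * F (\<Gamma> s))"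
proof -
  have Pm[measurable]: "Pt t \<in> borel_measurable borel" using Pt(1)[OF t] .
  have PAE: "AE s in lborel. ennreal (\<rho> t s) = Pt t s" using Pt(2)[OF t] .
  have \<rho>m[measurable]: "\<rho> t \<in> borel_measurable lebesgue" by (rule \<rho>_meas[OF t])
  have wm[measurable]: "w t \<in> borel_measurable lebesgue" by (rule w_meas[OF t])
  have Nm[measurable]: "N t \<in> borel_measurable borel" by (rule N_meas[OF t])
  have Nml[measurable]: "N t \<in> borel_measurable lebesgue" by (rule borel_leb[OF Nm])
  define a where "a u = indicator {0..t} u * ((\<gamma>b u)\<^sup>2 * \<psi> (\<Gamma> t - \<Gamma> u))" for u
  have am[measurable]: "a \<in> borel_measurable borel" unfolding a_def[abs_def] by measurable
  have a0: "0 \<le> a u" for u unfolding a_def using \<psi>_nonneg by (simp add: indicator_def)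
  define Pm where "Pm = (\<integral>\<^sup>+ s. ennreal (\<rho> t s * (\<psi> (\<Gamma> t - \<Gamma> s) - Kb (\<Gamma> t - \<Gamma> s))) \<partial>lborel)"
  define G where "G = integral {0..t} (\<lambda>s. (\<gamma> s)\<^sup>2 * K (\<Gamma> t - \<Gamma> s) * F (\<Gamma> s))"
  have LHS_le: "(\<integral>\<^sup>+u. ennreal (a u) * N t u \<partial>lborel) \<le> Pm"
  proof -
    have "(\<integral>\<^sup>+u. ennreal (a u) * N t u \<partial>lborel) =
      (\<integral>\<^sup>+u. (\<integral>\<^sup>+s. ennreal (a u) * (if 0 \<le> s \<and> s \<le> u then ennreal (Kb (\<Gamma> u - \<Gamma> s)) * Pt t s else 0) \<partial>lborel) \<partial>lborel)"
      unfolding N_def by (rule nn_integral_cong) (rule nn_integral_cmult[symmetric], measurable)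
    also have "\<dots> = (\<integral>\<^sup>+s. (\<integral>\<^sup>+u. ennreal (a u) * (if 0 \<le> s \<and> s \<le> u then ennreal (Kb (\<Gamma> u - \<Gamma> s)) * Pt t s else 0) \<partial>lborel) \<partial>lborel)"
      by (rule lborel_pair.Fubini'[where f="\<lambda>s u. ennreal (a u) * (if 0 \<le> s \<and> s \<le> u then ennreal (Kb (\<Gamma> u - \<Gamma> s)) * Pt t s else 0)"]) measurable
    also have "\<dots> \<le> (\<integral>\<^sup>+s. Pt t s * ennreal (indicator {0..t} s * (\<psi> (\<Gamma> t - \<Gamma> s) - Kb (\<Gamma> t - \<Gamma> s))) \<partial>lborel)"
    proof (rule nn_integral_mono)
      fix s
      show "(\<integral>\<^sup>+u. ennreal (a u) * (if 0 \<le> s \<and> s \<le> u then ennreal (Kb (\<Gamma> u - \<Gamma> s)) * Pt t s else 0) \<partial>lborel)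
          \<le> Pt t s * ennreal (indicator {0..t} s * (\<psi> (\<Gamma> t - \<Gamma> s) - Kb (\<Gamma> t - \<Gamma> s)))"
      proof (cases "0 \<le> s \<and> s \<le> t")
        case True
        then have st: "0 \<le> s" "s \<le> t" by auto
        define f1 where "f1 u = (\<gamma>b u)\<^sup>2 * \<psi> (\<Gamma> t - \<Gamma> u) * Kb (\<Gamma> u - \<Gamma> s)" for u
        have f1m[measurable]: "f1 \<in> borel_measurable borel" unfolding f1_def[abs_def] by measurable
        have eq: "ennreal (a u) * (if 0 \<le> s \<and> s \<le> u then ennreal (Kb (\<Gamma> u - \<Gamma> s)) * Pt t s else 0)
            = Pt t s * (ennreal (f1 u) * indicator {s..t} u)" for u
        proof (cases "u \<in> {s..t}")
          case True
          then have "0 \<le> u" "u \<le> t" "s \<le> u" using st by auto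
          then show ?thesis using True st \<psi>_nonneg[of "\<Gamma> t - \<Gamma> u"] Kb_nonneg[of "\<Gamma> u - \<Gamma> s"]
            by (simp add: a_def f1_def ennreal_mult mult_ac)
        next
          case False
          then have "u < s \<or> t < u" by auto
          then show ?thesis using st by (auto simp: a_def)
        qed
        have "(\<integral>\<^sup>+u. ennreal (a u) * (if 0 \<le> s \<and> s \<le> u then ennreal (Kb (\<Gamma> u - \<Gamma> s)) * Pt t s else 0) \<partial>lborel)
            = (\<integral>\<^sup>+u. Pt t s * (ennreal (f1 u) * indicator {s..t} u) \<partial>lborel)"
          using eq by simp
        also have "\<dots> = Pt t s * (\<integral>\<^sup>+u. ennreal (f1 u) * indicator {s..t} u \<partial>lborel)"
          by (rule nn_integral_cmult) measurable
        also have "(\<integral>\<^sup>+u. ennreal (f1 u) * indicator {s..t} u \<partial>lborel) = ennreal (integral {s..t} f1)"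
          by (rule nn_integral_has_integral_lebesgue'[OF _ integrable_integral])
             (use column(1)[OF st] in \<open>auto simp: f1_def[abs_def] \<gamma>b_nonneg \<psi>_nonneg Kb_nonneg\<close>)
        also have "Pt t s * ennreal (integral {s..t} f1) \<le> Pt t s * ennreal (\<psi> (\<Gamma> t - \<Gamma> s) - Kb (\<Gamma> t - \<Gamma> s))"
          using column(2)[OF st] by (intro mult_left_mono ennreal_leI) (auto simp: f1_def[abs_def])
        finally show ?thesis using st by simp
      next
        case False
        have z: "ennreal (a u) * (if 0 \<le> s \<and> s \<le> u then ennreal (Kb (\<Gamma> u - \<Gamma> s)) * Pt t s else 0) = 0" for u
          using False by (auto simp: a_def)
        have "(\<integral>\<^sup>+u. ennreal (a u) * (if 0 \<le> s \<and> s \<le> u then ennreal (Kb (\<Gamma> u - \<Gamma> s)) * Pt t s else 0) \<partial>lborel) = (\<integral>\<^sup>+(u::real). 0 \<partial>lborel)"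
          by (simp only: z)
        then show ?thesis by simp
      qed
    qed
    also have "\<dots> = Pm" unfolding Pm_def
    proof (rule nn_integral_cong_AE)
      show "AE s in lborel. Pt t s * ennreal (indicator {0..t} s * (\<psi> (\<Gamma> t - \<Gamma> s) - Kb (\<Gamma> t - \<Gamma> s))) =
          ennreal (\<rho> t s * (\<psi> (\<Gamma> t - \<Gamma> s) - Kb (\<Gamma> t - \<Gamma> s)))"
        using PAE
      proof (rule eventually_mono)
        fix s assume P: "ennreal (\<rho> t s) = Pt t s"
        show "Pt t s * ennreal (indicator {0..t} s * (\<psi> (\<Gamma> t - \<Gamma> s) - Kb (\<Gamma> t - \<Gamma> s))) =
          ennreal (\<rho> t s * (\<psi> (\<Gamma> t - \<Gamma> s) - Kb (\<Gamma> t - \<Gamma> s)))"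
        proof (cases "s \<in> {0..t}")
          case True
          then show ?thesis using P[symmetric] \<rho>_nonneg[of t s] \<psi>_ge[of "\<Gamma> t - \<Gamma> s"]
            by (simp add: ennreal_mult)
        next
          case False
          then show ?thesis using P[symmetric] by (simp add: \<rho>_def)
        qed
      qed
    qed
    finally show ?thesis .
  qed
  define A1 where "A1 u = a u * enn2real (N t u)" for u
  define A2 where "A2 u = \<psi> (\<Gamma> t - \<Gamma> u) * w t u" for u
  define A3 where "A3 u = \<psi> (\<Gamma> t - \<Gamma> u) * \<rho> t u" for u
  note [measurable] = id_leb \<Gamma>_leb \<gamma>b_leb Kb_leb \<psi>_leb
  have A1m[measurable]: "A1 \<in> borel_measurable lebesgue" unfolding A1_def[abs_def] using am by measurable
  have A2m[measurable]: "A2 \<in> borel_measurable lebesgue" unfolding A2_def[abs_def] by measurable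
  have A3m[measurable]: "A3 \<in> borel_measurable lebesgue" unfolding A3_def[abs_def] by measurable
  have w0: "0 \<le> w t u" for u
    unfolding w_def using F_nonneg[OF \<Gamma>_nonneg[of u]] by (auto simp: indicator_def)
  have A10: "0 \<le> A1 u" for u unfolding A1_def using a0 by simp
  have A20: "0 \<le> A2 u" for u unfolding A2_def using \<psi>_nonneg w0 by simp
  have A3eq: "A3 u = A1 u + A2 u" for u
  proof (cases "u \<in> {0..t}")
    case True
    then have u: "0 \<le> u" "u \<le> t" by auto
    have "Sf u = enn2real (N t u)" by (rule Sf_N[OF t u])
    then show ?thesis using True R_Sf[OF u(1)] \<gamma>b_eq[OF u(1)]
      by (simp add: A1_def A2_def A3_def a_def w_def \<rho>_def algebra_simps)
  qed (simp add: A1_def A2_def A3_def a_def w_def \<rho>_def)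

  have LHS_eq: "(\<integral>\<^sup>+u. ennreal (a u) * N t u \<partial>lborel) = (\<integral>\<^sup>+u. ennreal (A1 u) \<partial>lebesgue)"
  proof -
    have "(\<integral>\<^sup>+u. ennreal (a u) * N t u \<partial>lborel) = (\<integral>\<^sup>+u. ennreal (A1 u) \<partial>lborel)"
    proof (rule nn_integral_cong)
      fix u
      show "ennreal (a u) * N t u = ennreal (A1 u)"
      proof (cases "u \<in> {0..t}")
        case True
        then have u: "0 \<le> u" "u \<le> t" by auto
        show ?thesis using N_Sf[OF t u] Sf_N[OF t u] Sf_nonneg[OF u(1)] a0[of u]
          by (simp add: A1_def ennreal_mult)
      qed (simp add: a_def A1_def)
    qed
    then show ?thesis by (simp add: nn_integral_completion)
  qed
  have split1: "(\<integral>\<^sup>+u. ennreal (A3 u) \<partial>lebesgue) = (\<integral>\<^sup>+u. ennreal (A1 u) \<partial>lebesgue) + (\<integral>\<^sup>+u. ennreal (A2 u) \<partial>lebesgue)"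
  proof -
    have "(\<integral>\<^sup>+u. ennreal (A3 u) \<partial>lebesgue) = (\<integral>\<^sup>+u. ennreal (A1 u) + ennreal (A2 u) \<partial>lebesgue)"
      by (rule nn_integral_cong) (simp add: A3eq A10 A20)
    also have "\<dots> = (\<integral>\<^sup>+u. ennreal (A1 u) \<partial>lebesgue) + (\<integral>\<^sup>+u. ennreal (A2 u) \<partial>lebesgue)"
      by (rule nn_integral_add) measurable
    finally show ?thesis .
  qed
  have SfI: "(\<integral>\<^sup>+s. ennreal (\<rho> t s * Kb (\<Gamma> t - \<Gamma> s)) \<partial>lebesgue) = ennreal (Sf t)"
  proof -
    have "(\<integral>\<^sup>+ s. ennreal ((\<gamma> s)\<^sup>2 * K (\<Gamma> t - \<Gamma> s) * R s) * indicator {0..t} s \<partial>lborel) = ennreal (Sf t)"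
      unfolding Sf_def
      by (rule nn_integral_has_integral_lebesgue'[OF _ integrable_integral[OF R_int[OF t]]])
         (auto intro: kR_nonneg)
    moreover have "(\<integral>\<^sup>+ s. ennreal ((\<gamma> s)\<^sup>2 * K (\<Gamma> t - \<Gamma> s) * R s) * indicator {0..t} s \<partial>lborel)
        = (\<integral>\<^sup>+s. ennreal (\<rho> t s * Kb (\<Gamma> t - \<Gamma> s)) \<partial>lborel)"
    proof (rule nn_integral_cong)
      fix s
      show "ennreal ((\<gamma> s)\<^sup>2 * K (\<Gamma> t - \<Gamma> s) * R s) * indicator {0..t} s = ennreal (\<rho> t s * Kb (\<Gamma> t - \<Gamma> s))"
      proof (cases "s \<in> {0..t}")
        case True
        then have "\<Gamma> s \<le> \<Gamma> t" by (intro \<Gamma>_mono) auto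
        then show ?thesis using True by (simp add: \<rho>_def Kb_eq mult_ac)
      qed (simp add: \<rho>_def)
    qed
    ultimately show ?thesis by (simp add: nn_integral_completion)
  qed
  have split2: "(\<integral>\<^sup>+u. ennreal (A3 u) \<partial>lebesgue) = Pm + ennreal (Sf t)"
  proof -
    have "(\<integral>\<^sup>+u. ennreal (A3 u) \<partial>lebesgue) = (\<integral>\<^sup>+u. ennreal (\<rho> t u * (\<psi> (\<Gamma> t - \<Gamma> u) - Kb (\<Gamma> t - \<Gamma> u))) + ennreal (\<rho> t u * Kb (\<Gamma> t - \<Gamma> u)) \<partial>lebesgue)"
    proof (rule nn_integral_cong)
      fix u
      have "0 \<le> \<rho> t u * (\<psi> (\<Gamma> t - \<Gamma> u) - Kb (\<Gamma> t - \<Gamma> u))" using \<rho>_nonneg \<psi>_ge by simp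
      moreover have "0 \<le> \<rho> t u * Kb (\<Gamma> t - \<Gamma> u)" using \<rho>_nonneg Kb_nonneg by simp
      ultimately show "ennreal (A3 u) = ennreal (\<rho> t u * (\<psi> (\<Gamma> t - \<Gamma> u) - Kb (\<Gamma> t - \<Gamma> u))) + ennreal (\<rho> t u * Kb (\<Gamma> t - \<Gamma> u))"
        by (simp add: A3_def ennreal_plus[symmetric] algebra_simps del: ennreal_plus)
    qed
    also have "\<dots> = (\<integral>\<^sup>+u. ennreal (\<rho> t u * (\<psi> (\<Gamma> t - \<Gamma> u) - Kb (\<Gamma> t - \<Gamma> u))) \<partial>lebesgue) + (\<integral>\<^sup>+u. ennreal (\<rho> t u * Kb (\<Gamma> t - \<Gamma> u)) \<partial>lebesgue)"
      by (rule nn_integral_add) measurable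
    also have "(\<integral>\<^sup>+u. ennreal (\<rho> t u * (\<psi> (\<Gamma> t - \<Gamma> u) - Kb (\<Gamma> t - \<Gamma> u))) \<partial>lebesgue) = Pm"
      unfolding Pm_def by (simp add: nn_integral_completion)
    finally show ?thesis using SfI by simp
  qed
  have Pm_fin: "Pm \<noteq> \<infinity>"
  proof -
    have "Pm = (\<integral>\<^sup>+u. ennreal (\<rho> t u * (\<psi> (\<Gamma> t - \<Gamma> u) - Kb (\<Gamma> t - \<Gamma> u))) \<partial>lebesgue)"
      unfolding Pm_def by (simp add: nn_integral_completion)
    also have "\<dots> \<le> (\<integral>\<^sup>+u. ennreal (Cc - 1) * ennreal (\<rho> t u * Kb (\<Gamma> t - \<Gamma> u)) \<partial>lebesgue)"
    proof (rule nn_integral_mono)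
      fix u
      have "\<psi> (\<Gamma> t - \<Gamma> u) - Kb (\<Gamma> t - \<Gamma> u) \<le> (Cc - 1) * Kb (\<Gamma> t - \<Gamma> u)"
        using \<psi>_le(1)[of "\<Gamma> t - \<Gamma> u"] by (simp add: algebra_simps)
      then have "\<rho> t u * (\<psi> (\<Gamma> t - \<Gamma> u) - Kb (\<Gamma> t - \<Gamma> u)) \<le> (Cc - 1) * (\<rho> t u * Kb (\<Gamma> t - \<Gamma> u))"
        using \<rho>_nonneg[of t u] by (metis mult.left_commute mult_left_mono)
      then show "ennreal (\<rho> t u * (\<psi> (\<Gamma> t - \<Gamma> u) - Kb (\<Gamma> t - \<Gamma> u))) \<le> ennreal (Cc - 1) * ennreal (\<rho> t u * Kb (\<Gamma> t - \<Gamma> u))"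
        using cst(2) by (simp add: ennreal_mult[symmetric] \<rho>_nonneg Kb_nonneg)
    qed
    also have "\<dots> = ennreal (Cc - 1) * ennreal (Sf t)"
      by (subst nn_integral_cmult) (measurable, simp add: SfI)
    also have "ennreal (Cc - 1) * ennreal (Sf t) = ennreal ((Cc - 1) * Sf t)"
      using cst(2) by (simp add: ennreal_mult')
    finally have "Pm \<le> ennreal ((Cc - 1) * Sf t)" .
    then show ?thesis by (auto simp: top_unique)
  qed
  have "Pm + ennreal (Sf t) = (\<integral>\<^sup>+u. ennreal (A1 u) \<partial>lebesgue) + (\<integral>\<^sup>+u. ennreal (A2 u) \<partial>lebesgue)"
    using split1 split2 by simp
  also have "\<dots> \<le> Pm + (\<integral>\<^sup>+u. ennreal (A2 u) \<partial>lebesgue)"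
    using LHS_le LHS_eq by (simp add: add_right_mono)
  finally have S_le: "ennreal (Sf t) \<le> (\<integral>\<^sup>+u. ennreal (A2 u) \<partial>lebesgue)"
    using Pm_fin by (simp add: ennreal_add_left_cancel_le)
  have A2_le: "(\<integral>\<^sup>+u. ennreal (A2 u) \<partial>lebesgue) \<le> ennreal (Cc * G)"
  proof -
    have "(\<integral>\<^sup>+u. ennreal (A2 u) \<partial>lebesgue) \<le> (\<integral>\<^sup>+u. ennreal Cc * ennreal (Kb (\<Gamma> t - \<Gamma> u) * w t u) \<partial>lebesgue)"
    proof (rule nn_integral_mono)
      fix u
      have "A2 u \<le> Cc * (Kb (\<Gamma> t - \<Gamma> u) * w t u)"
      proof -
        have "\<psi> (\<Gamma> t - \<Gamma> u) * w t u \<le> Cc * Kb (\<Gamma> t - \<Gamma> u) * w t u"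
          by (rule mult_right_mono[OF \<psi>_le(1) w0])
        then show ?thesis unfolding A2_def by (simp add: mult.assoc)
      qed
      then show "ennreal (A2 u) \<le> ennreal Cc * ennreal (Kb (\<Gamma> t - \<Gamma> u) * w t u)"
        using cst(2) by (simp add: ennreal_mult[symmetric] Kb_nonneg w0)
    qed
    also have "\<dots> = ennreal Cc * (\<integral>\<^sup>+u. ennreal (Kb (\<Gamma> t - \<Gamma> u) * w t u) \<partial>lebesgue)"
      by (rule nn_integral_cmult) measurable
    also have "(\<integral>\<^sup>+u. ennreal (Kb (\<Gamma> t - \<Gamma> u) * w t u) \<partial>lebesgue) = ennreal G"
    proof -
      have "(\<integral>\<^sup>+ s. ennreal ((\<gamma> s)\<^sup>2 * K (\<Gamma> t - \<Gamma> s) * F (\<Gamma> s)) * indicator {0..t} s \<partial>lborel) = ennreal G"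
        unfolding G_def
        by (rule nn_integral_has_integral_lebesgue'[OF _ integrable_integral[OF kf_int[OF t]]])
           (auto intro: kf_nonneg)
      moreover have "(\<integral>\<^sup>+ s. ennreal ((\<gamma> s)\<^sup>2 * K (\<Gamma> t - \<Gamma> s) * F (\<Gamma> s)) * indicator {0..t} s \<partial>lborel)
          = (\<integral>\<^sup>+s. ennreal (Kb (\<Gamma> t - \<Gamma> s) * w t s) \<partial>lborel)"
      proof (rule nn_integral_cong)
        fix s
        show "ennreal ((\<gamma> s)\<^sup>2 * K (\<Gamma> t - \<Gamma> s) * F (\<Gamma> s)) * indicator {0..t} s = ennreal (Kb (\<Gamma> t - \<Gamma> s) * w t s)"
        proof (cases "s \<in> {0..t}")
          case True
          then have "\<Gamma> s \<le> \<Gamma> t" by (intro \<Gamma>_mono) auto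
          then show ?thesis using True by (simp add: w_def Kb_eq mult_ac)
        qed (simp add: w_def)
      qed
      ultimately show ?thesis by (simp add: nn_integral_completion)
    qed
    finally have "(\<integral>\<^sup>+u. ennreal (A2 u) \<partial>lebesgue) \<le> ennreal Cc * ennreal G" .
    moreover have "ennreal Cc * ennreal G = ennreal (Cc * G)" using cst(2) by (simp add: ennreal_mult')
    ultimately show ?thesis by simp
  qed
  have G0: "0 \<le> G" unfolding G_def by (rule integral_nonneg[OF kf_int[OF t]]) (auto intro: kf_nonneg)
  have "ennreal (Sf t) \<le> ennreal (Cc * G)" using S_le A2_le by simp
  then have "Sf t \<le> Cc * G" using G0 cst(2) by simp
  then show ?thesis using R_Sf[OF t] unfolding G_def by simp
qed

end

theorem lemma14:
  fixes \<gamma> K F R :: "real \<Rightarrow> real" and \<Gamma> :: "real \<Rightarrow> real"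
  assumes \<gamma>_nonneg: "\<And>t. t \<ge> 0 \<Longrightarrow> \<gamma> t \<ge> 0"
    and \<gamma>_decr: "antimono_on {0..} \<gamma>"
    and \<Gamma>_def: "\<And>t. \<Gamma> t = integral {0..t} \<gamma>"
    and K_nonneg: "\<And>t. t \<ge> 0 \<Longrightarrow> K t \<ge> 0"
    and K_decr: "antimono_on {0..} K"
    and K_L1: "K integrable_on {0..}"
    and F_nonneg: "\<And>t. t \<ge> 0 \<Longrightarrow> F t \<ge> 0"
    and F_meas: "F measurable_on {0..}"
    and R_nonneg: "\<And>t. t \<ge> 0 \<Longrightarrow> R t \<ge> 0"
    and R_int: "\<And>t. t \<ge> 0 \<Longrightarrow>
        (\<lambda>s. (\<gamma> s)\<^sup>2 * K (\<Gamma> t - \<Gamma> s) * R s) integrable_on {0..t}"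
    and R_eq: "\<And>t. t \<ge> 0 \<Longrightarrow>
        R t = F (\<Gamma> t) + integral {0..t} (\<lambda>s. (\<gamma> s)\<^sup>2 * K (\<Gamma> t - \<Gamma> s) * R s)"
  shows "(\<forall>t\<ge>0. R t \<ge> F (\<Gamma> t) + integral {0..t} (\<lambda>s. (\<gamma> s)\<^sup>2 * K (\<Gamma> t - \<Gamma> s) * F (\<Gamma> s)))
    \<and> (\<forall>\<epsilon> T. \<epsilon> > 0 \<longrightarrow> T > 0 \<longrightarrow>
         (\<forall>t>T. integral {0..t} (\<lambda>s. K s * K (t - s)) \<le> 2 * (1 + \<epsilon>) * integral {0..} K * K t) \<longrightarrow>
         2 * integral {0..} K * (1 + \<epsilon>) * \<gamma> 0 < 1 \<longrightarrow>
         K T > 0 \<longrightarrow>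
         (\<forall>t\<ge>0. R t \<le> F (\<Gamma> t) +
            ((K 0 / (K T * (2 * \<epsilon> + 1)) + 2) * (1 / (1 - 2 * \<gamma> 0 * integral {0..} K * (1 + \<epsilon>))))
            * integral {0..t} (\<lambda>s. (\<gamma> s)\<^sup>2 * K (\<Gamma> t - \<Gamma> s) * F (\<Gamma> s))))"
  proof -
  interpret L14 \<gamma> K F R \<Gamma>
    using \<gamma>_nonneg \<gamma>_decr \<Gamma>_def K_nonneg K_decr K_L1 F_nonneg R_nonneg R_int R_eq
    by unfold_locales auto
  show ?thesis
  proof (intro conjI allI impI)
    fix t :: real assume "t \<ge> 0"
    then show "R t \<ge> F (\<Gamma> t) + integral {0..t} (\<lambda>s. (\<gamma> s)\<^sup>2 * K (\<Gamma> t - \<Gamma> s) * F (\<Gamma> s))"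
      by (rule part1)
  next
    fix \<epsilon> T t :: real
    assume h: "\<epsilon> > 0" "T > 0"
      "\<forall>t>T. integral {0..t} (\<lambda>s. K s * K (t - s)) \<le> 2 * (1 + \<epsilon>) * integral {0..} K * K t"
      "2 * integral {0..} K * (1 + \<epsilon>) * \<gamma> 0 < 1" "K T > 0" and t: "t \<ge> 0"
    interpret L: L14b \<gamma> K F R \<Gamma> \<epsilon> T
      using h by unfold_locales auto
    show "R t \<le> F (\<Gamma> t) +
            ((K 0 / (K T * (2 * \<epsilon> + 1)) + 2) * (1 / (1 - 2 * \<gamma> 0 * integral {0..} K * (1 + \<epsilon>))))
            * integral {0..t} (\<lambda>s. (\<gamma> s)\<^sup>2 * K (\<Gamma> t - \<Gamma> s) * F (\<Gamma> s))"
      using L.main[OF t] unfolding L.Cc_def L.LK_def .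
  qed
qed

end
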